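(* Let $a,e\in\mathbb{R}$, $\omega>0$, and let $\alpha_i(t)$ ($i=1,\dots,4$) be scalar continuous functions. (i) Suppose $\alpha_3(t)$ is $\omega$-periodic and odd, and $a(a+e)<0$. Then the solution $$x(t)=\sqrt{-a(a+e)}\sin\Big(\int_0^t\alpha_3(s)ds\Big),\ y(t)=\sqrt{-a(a+e)}\cos\Big(\int_0^t\alpha_3(s)ds\Big),\ z(t)=-a$$ of the system $$\begin{aligned}\dot x&=(ax+xz)(1+\alpha_1(t))+x(a+z)\alpha_2(t)+y\alpha_3(t),\\ \dot y&=(ay+yz)(1+\alpha_1(t))+y(a+z)\alpha_2(t)-x\alpha_3(t),\\ \dot z&=(ez-x^2-y^2-z^2)(1+\alpha_1(t)+\alpha_2(t))\end{aligned}$$ is $\omega$-periodic (the period not necessarily minimal). (ii) Suppose $\alpha_3(t)+a^4\alpha_4(t)$ is $\omega$-periodic and odd. Then the solution $$x(t)=a\sin\Big(\int_0^t(\alpha_3(s)+a^4\alpha_4(s))ds\Big),\ y(t)=a\cos\Big(\int_0^t(\alpha_3(s)+a^4\alpha_4(s))ds\Big),\ z(t)=-a$$ of the system $$\begin{aligned}\dot x&=(ax+xz)(1+\alpha_1(t))+x(a+z)\alpha_2(t)+y\alpha_3(t)-y(x^2+y^2)(4az+x^2+y^2+2z^2)\alpha_4(t),\\ \dot y&=(ay+yz)(1+\alpha_1(t))+y(a+z)\alpha_2(t)-x\alpha_3(t)+x(x^2+y^2)(4az+x^2+y^2+2z^2)\alpha_4(t),\\ \dot z&=-(2az+x^2+y^2+z^2)(1+\alpha_1(t)+\alpha_2(t))\end{aligned}$$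 is $\omega$-periodic (the period not necessarily minimal). *)

theory Defs
  imports "HOL-Analysis.Analysis"
begin

end

theory Submission
  imports Defs
begin

lemma theta_deriv:
  fixes f :: "real \<Rightarrow> real"
  assumes "continuous_on UNIV f"
  shows "((\<lambda>t. interval_lebesgue_integral lborel (ereal 0) (ereal t) f) has_real_derivative f x) (at x)"
proof -
  have c: "continuous_on {min 0 x - 1..max 0 x + 1} f"
    using assms continuous_on_subset by blast
  have "((\<lambda>u. interval_lebesgue_integral lborel (ereal 0) (ereal u) f) has_vector_derivative (f x)) (at x within {min 0 x - 1..max 0 x + 1})"
    using interval_integral_FTC2[OF _ _ c, of 0 x] by linarith
  moreover have "at x within {min 0 x - 1..max 0 x + 1} = at x"
    by (rule at_within_Icc_at) auto
  ultimately show ?thesis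
    by (simp add: has_real_derivative_iff_has_vector_derivative)
qed

lemma theta_periodic:
  fixes f :: "real \<Rightarrow> real"
  assumes cf: "continuous_on UNIV f" and per: "\<forall>t. f (t + w) = f t" and odd: "\<forall>t. f (- t) = - f t"
  shows "interval_lebesgue_integral lborel (ereal 0) (ereal (t + w)) f
       = interval_lebesgue_integral lborel (ereal 0) (ereal t) f"
proof -
  define \<theta> where "\<theta> = (\<lambda>t. interval_lebesgue_integral lborel (ereal 0) (ereal t) f)"
  have D: "\<And>x. (\<theta> has_real_derivative f x) (at x)"
    unfolding \<theta>_def by (rule theta_deriv[OF cf])
  have even: "\<theta> (- s) = \<theta> s" for s
  proof -
    have "\<forall>x. ((\<lambda>s. \<theta> (- s) - \<theta> s) has_real_derivative 0) (at x)"
    proof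
      fix x
      have "((\<lambda>s. \<theta> (- s) - \<theta> s) has_real_derivative (f (- x) * (- 1) - f x)) (at x)"
        by (rule derivative_eq_intros DERIV_chain2[OF D] D | simp)+
      then show "((\<lambda>s. \<theta> (- s) - \<theta> s) has_real_derivative 0) (at x)"
        using odd by simp
    qed
    from DERIV_isconst_all[OF this, of s 0] show ?thesis by simp
  qed
  have "\<forall>x. ((\<lambda>s. \<theta> (s + w) - \<theta> s) has_real_derivative 0) (at x)"
  proof
    fix x
    have "((\<lambda>s. \<theta> (s + w) - \<theta> s) has_real_derivative (f (x + w) * (1 + 0) - f x)) (at x)"
      by (rule derivative_eq_intros DERIV_chain2[OF D] D | simp)+
    then show "((\<lambda>s. \<theta> (s + w) - \<theta> s) has_real_derivative 0) (at x)"
      using per by simp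
  qed
  from DERIV_isconst_all[OF this, of t "- w / 2"]
  have "\<theta> (t + w) - \<theta> t = \<theta> (w / 2) - \<theta> (- (w / 2))" by simp
  also have "\<dots> = 0" using even by simp
  finally show ?thesis unfolding \<theta>_def by simp
qed

theorem proposition2:
  fixes a e \<omega> :: real
    and \<alpha>1 \<alpha>2 \<alpha>3 \<alpha>4 :: "real \<Rightarrow> real"
  assumes \<omega>_pos: "\<omega> > 0"
    and cont1: "continuous_on UNIV \<alpha>1"
    and cont2: "continuous_on UNIV \<alpha>2"
    and cont3: "continuous_on UNIV \<alpha>3"
    and cont4: "continuous_on UNIV \<alpha>4"
  shows
  "((\<forall>t. \<alpha>3 (t + \<omega>) = \<alpha>3 t) \<and> (\<forall>t. \<alpha>3 (- t) = - \<alpha>3 t) \<and> a * (a + e) < 0 \<longrightarrow>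
     (let \<theta> = (\<lambda>t. interval_lebesgue_integral lborel (ereal 0) (ereal t) \<alpha>3);
          x = (\<lambda>t. sqrt (- a * (a + e)) * sin (\<theta> t));
          y = (\<lambda>t. sqrt (- a * (a + e)) * cos (\<theta> t));
          z = (\<lambda>t. - a)
      in (\<forall>t.
            (x has_real_derivative
               ((a * x t + x t * z t) * (1 + \<alpha>1 t) + x t * (a + z t) * \<alpha>2 t + y t * \<alpha>3 t)) (at t)
          \<and> (y has_real_derivative
               ((a * y t + y t * z t) * (1 + \<alpha>1 t) + y t * (a + z t) * \<alpha>2 t - x t * \<alpha>3 t)) (at t)
          \<and> (z has_real_derivative
               ((e * z t - (x t)\<^sup>2 - (y t)\<^sup>2 - (z t)\<^sup>2) * (1 + \<alpha>1 t + \<alpha>2 t))) (at t))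
        \<and> (\<forall>t. x (t + \<omega>) = x t \<and> y (t + \<omega>) = y t \<and> z (t + \<omega>) = z t)))
   \<and>
   ((\<forall>t. \<alpha>3 (t + \<omega>) + a ^ 4 * \<alpha>4 (t + \<omega>) = \<alpha>3 t + a ^ 4 * \<alpha>4 t) \<and>
    (\<forall>t. \<alpha>3 (- t) + a ^ 4 * \<alpha>4 (- t) = - (\<alpha>3 t + a ^ 4 * \<alpha>4 t)) \<longrightarrow>
     (let \<theta> = (\<lambda>t. interval_lebesgue_integral lborel (ereal 0) (ereal t) (\<lambda>s. \<alpha>3 s + a ^ 4 * \<alpha>4 s));
          x = (\<lambda>t. a * sin (\<theta> t));
          y = (\<lambda>t. a * cos (\<theta> t));
          z = (\<lambda>t. - a)
      in (\<forall>t.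
            (x has_real_derivative
               ((a * x t + x t * z t) * (1 + \<alpha>1 t) + x t * (a + z t) * \<alpha>2 t + y t * \<alpha>3 t
                - y t * ((x t)\<^sup>2 + (y t)\<^sup>2) * (4 * a * z t + (x t)\<^sup>2 + (y t)\<^sup>2 + 2 * (z t)\<^sup>2) * \<alpha>4 t)) (at t)
          \<and> (y has_real_derivative
               ((a * y t + y t * z t) * (1 + \<alpha>1 t) + y t * (a + z t) * \<alpha>2 t - x t * \<alpha>3 t
                + x t * ((x t)\<^sup>2 + (y t)\<^sup>2) * (4 * a * z t + (x t)\<^sup>2 + (y t)\<^sup>2 + 2 * (z t)\<^sup>2) * \<alpha>4 t)) (at t)
          \<and> (z has_real_derivative
               (- (2 * a * z t + (x t)\<^sup>2 + (y t)\<^sup>2 + (z t)\<^sup>2) * (1 + \<alpha>1 t + \<alpha>2 t))) (at t))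
        \<and> (\<forall>t. x (t + \<omega>) = x t \<and> y (t + \<omega>) = y t \<and> z (t + \<omega>) = z t)))"
proof (intro conjI impI)
  assume h: "(\<forall>t. \<alpha>3 (t + \<omega>) = \<alpha>3 t) \<and> (\<forall>t. \<alpha>3 (- t) = - \<alpha>3 t) \<and> a * (a + e) < 0"
  define \<theta> where "\<theta> = (\<lambda>t. interval_lebesgue_integral lborel (ereal 0) (ereal t) \<alpha>3)"
  define c where "c = sqrt (- a * (a + e))"
  have c2: "c^2 = - a * (a + e)" using h unfolding c_def by simp
  have D: "\<And>x. (\<theta> has_real_derivative \<alpha>3 x) (at x)"
    unfolding \<theta>_def by (rule theta_deriv[OF cont3])
  have P: "\<And>t. \<theta> (t + \<omega>) = \<theta> t"
    unfolding \<theta>_def using theta_periodic[OF cont3] h by blast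
  show "let \<theta> = (\<lambda>t. interval_lebesgue_integral lborel (ereal 0) (ereal t) \<alpha>3);
          x = (\<lambda>t. sqrt (- a * (a + e)) * sin (\<theta> t));
          y = (\<lambda>t. sqrt (- a * (a + e)) * cos (\<theta> t));
          z = (\<lambda>t. - a)
      in (\<forall>t.
            (x has_real_derivative
               ((a * x t + x t * z t) * (1 + \<alpha>1 t) + x t * (a + z t) * \<alpha>2 t + y t * \<alpha>3 t)) (at t)
          \<and> (y has_real_derivative
               ((a * y t + y t * z t) * (1 + \<alpha>1 t) + y t * (a + z t) * \<alpha>2 t - x t * \<alpha>3 t)) (at t)
          \<and> (z has_real_derivative
               ((e * z t - (x t)\<^sup>2 - (y t)\<^sup>2 - (z t)\<^sup>2) * (1 + \<alpha>1 t + \<alpha>2 t))) (at t))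
        \<and> (\<forall>t. x (t + \<omega>) = x t \<and> y (t + \<omega>) = y t \<and> z (t + \<omega>) = z t)"
    unfolding Let_def \<theta>_def[symmetric] c_def[symmetric]
  proof (intro conjI allI)
    fix t
    have "((\<lambda>t. c * sin (\<theta> t)) has_real_derivative c * (cos (\<theta> t) * \<alpha>3 t)) (at t)"
      by (rule DERIV_cmult[OF DERIV_chain2[OF DERIV_sin D]])
    then show "((\<lambda>t. c * sin (\<theta> t)) has_real_derivative
      (a * (c * sin (\<theta> t)) + c * sin (\<theta> t) * - a) * (1 + \<alpha>1 t) + c * sin (\<theta> t) * (a + - a) * \<alpha>2 t + c * cos (\<theta> t) * \<alpha>3 t) (at t)"
      by (simp add: algebra_simps)
    have "((\<lambda>t. c * cos (\<theta> t)) has_real_derivative c * (- sin (\<theta> t) * \<alpha>3 t)) (at t)"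
      by (rule DERIV_cmult[OF DERIV_chain2[OF DERIV_cos D]])
    then show "((\<lambda>t. c * cos (\<theta> t)) has_real_derivative
      (a * (c * cos (\<theta> t)) + c * cos (\<theta> t) * - a) * (1 + \<alpha>1 t) + c * cos (\<theta> t) * (a + - a) * \<alpha>2 t - c * sin (\<theta> t) * \<alpha>3 t) (at t)"
      by (simp add: algebra_simps)
    have q0: "(c * sin (\<theta> t))\<^sup>2 + (c * cos (\<theta> t))\<^sup>2 = c^2"
      by (metis power_mult_distrib distrib_left sin_cos_squared_add mult_1_right)
    have "e * - a - (c * sin (\<theta> t))\<^sup>2 - (c * cos (\<theta> t))\<^sup>2 - (- a)\<^sup>2 = 0"
      using q0 c2 by (simp add: algebra_simps power2_eq_square)
    then show "((\<lambda>t. - a) has_real_derivative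
      (e * - a - (c * sin (\<theta> t))\<^sup>2 - (c * cos (\<theta> t))\<^sup>2 - (- a)\<^sup>2) * (1 + \<alpha>1 t + \<alpha>2 t)) (at t)"
      by simp
  qed (simp_all add: P)
next
  assume h: "(\<forall>t. \<alpha>3 (t + \<omega>) + a ^ 4 * \<alpha>4 (t + \<omega>) = \<alpha>3 t + a ^ 4 * \<alpha>4 t) \<and>
    (\<forall>t. \<alpha>3 (- t) + a ^ 4 * \<alpha>4 (- t) = - (\<alpha>3 t + a ^ 4 * \<alpha>4 t))"
  define \<theta> where "\<theta> = (\<lambda>t. interval_lebesgue_integral lborel (ereal 0) (ereal t) (\<lambda>s. \<alpha>3 s + a ^ 4 * \<alpha>4 s))"
  have cf: "continuous_on UNIV (\<lambda>s. \<alpha>3 s + a ^ 4 * \<alpha>4 s)"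
    by (intro continuous_intros cont3 cont4)
  have D: "\<And>x. (\<theta> has_real_derivative (\<alpha>3 x + a ^ 4 * \<alpha>4 x)) (at x)"
    unfolding \<theta>_def by (rule theta_deriv[OF cf])
  have P: "\<And>t. \<theta> (t + \<omega>) = \<theta> t"
    unfolding \<theta>_def using theta_periodic[OF cf] h by blast
  have sc: "\<And>u::real. (sin u)\<^sup>2 + (cos u)\<^sup>2 = 1" by (rule sin_cos_squared_add)
  show "let \<theta> = (\<lambda>t. interval_lebesgue_integral lborel (ereal 0) (ereal t) (\<lambda>s. \<alpha>3 s + a ^ 4 * \<alpha>4 s));
          x = (\<lambda>t. a * sin (\<theta> t));
          y = (\<lambda>t. a * cos (\<theta> t));
          z = (\<lambda>t. - a)
      in (\<forall>t.
            (x has_real_derivative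
               ((a * x t + x t * z t) * (1 + \<alpha>1 t) + x t * (a + z t) * \<alpha>2 t + y t * \<alpha>3 t
                - y t * ((x t)\<^sup>2 + (y t)\<^sup>2) * (4 * a * z t + (x t)\<^sup>2 + (y t)\<^sup>2 + 2 * (z t)\<^sup>2) * \<alpha>4 t)) (at t)
          \<and> (y has_real_derivative
               ((a * y t + y t * z t) * (1 + \<alpha>1 t) + y t * (a + z t) * \<alpha>2 t - x t * \<alpha>3 t
                + x t * ((x t)\<^sup>2 + (y t)\<^sup>2) * (4 * a * z t + (x t)\<^sup>2 + (y t)\<^sup>2 + 2 * (z t)\<^sup>2) * \<alpha>4 t)) (at t)
          \<and> (z has_real_derivative
               (- (2 * a * z t + (x t)\<^sup>2 + (y t)\<^sup>2 + (z t)\<^sup>2) * (1 + \<alpha>1 t + \<alpha>2 t))) (at t))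
        \<and> (\<forall>t. x (t + \<omega>) = x t \<and> y (t + \<omega>) = y t \<and> z (t + \<omega>) = z t)"
    unfolding Let_def \<theta>_def[symmetric]
  proof (intro conjI allI)
    fix t
    let ?s = "sin (\<theta> t)" and ?c = "cos (\<theta> t)"
    have q: "(a * ?s)\<^sup>2 + (a * ?c)\<^sup>2 = a^2"
      by (metis power_mult_distrib distrib_left sc mult_1_right)
    have sq: "(- a)\<^sup>2 = a^2" "4 * a * - a = -4 * a^2" "2 * a * - a = -2 * a^2"
      by (simp_all add: power2_eq_square)
    have r: "4 * a * - a + (a * ?s)\<^sup>2 + (a * ?c)\<^sup>2 + 2 * (- a)\<^sup>2 = - (a^2)"
      unfolding sq using q by linarith
    have "((\<lambda>t. a * sin (\<theta> t)) has_real_derivative a * (?c * (\<alpha>3 t + a ^ 4 * \<alpha>4 t))) (at t)"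
      by (rule DERIV_cmult[OF DERIV_chain2[OF DERIV_sin D]])
    then show "((\<lambda>t. a * sin (\<theta> t)) has_real_derivative
      (a * (a * ?s) + a * ?s * - a) * (1 + \<alpha>1 t) + a * ?s * (a + - a) * \<alpha>2 t + a * ?c * \<alpha>3 t -
       a * ?c * ((a * ?s)\<^sup>2 + (a * ?c)\<^sup>2) * (4 * a * - a + (a * ?s)\<^sup>2 + (a * ?c)\<^sup>2 + 2 * (- a)\<^sup>2) * \<alpha>4 t) (at t)"
      unfolding r q by (simp add: algebra_simps power2_eq_square power4_eq_xxxx)
    have "((\<lambda>t. a * cos (\<theta> t)) has_real_derivative a * (- ?s * (\<alpha>3 t + a ^ 4 * \<alpha>4 t))) (at t)"
      by (rule DERIV_cmult[OF DERIV_chain2[OF DERIV_cos D]])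
    then show "((\<lambda>t. a * cos (\<theta> t)) has_real_derivative
      (a * (a * ?c) + a * ?c * - a) * (1 + \<alpha>1 t) + a * ?c * (a + - a) * \<alpha>2 t - a * ?s * \<alpha>3 t +
       a * ?s * ((a * ?s)\<^sup>2 + (a * ?c)\<^sup>2) * (4 * a * - a + (a * ?s)\<^sup>2 + (a * ?c)\<^sup>2 + 2 * (- a)\<^sup>2) * \<alpha>4 t) (at t)"
      unfolding r q by (simp add: algebra_simps power2_eq_square power4_eq_xxxx)
    have "2 * a * - a + (a * ?s)\<^sup>2 + (a * ?c)\<^sup>2 + (- a)\<^sup>2 = 0"
      unfolding sq using q by linarith
    then show "((\<lambda>t. - a) has_real_derivative
      - (2 * a * - a + (a * ?s)\<^sup>2 + (a * ?c)\<^sup>2 + (- a)\<^sup>2) * (1 + \<alpha>1 t + \<alpha>2 t)) (at t)"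
      by simp
  qed (simp_all add: P)
qed

end
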